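(* (i) Every finite $\mathbf{HpsUL}^\ast$-chain is an $\mathbf{HpsUL}^\ast_\omega$-chain. (ii) Every finite $\mathbf{HpsUL}^\ast$-algebra is an $\mathbf{HpsUL}^\ast_\omega$-algebra.
   Context: An $\mathbf{HpsUL}$-algebra is a structure $\mathcal A=\langle A,\wedge,\vee,\cdot,\backslash,/,e,f,\bot,\top\rangle$ such that: - $\langle A,\wedge,\vee,\bot,\top\rangle$ is a bounded lattice; - $\langle A,\cdot,e\rangle$ is a monoid; - for all $x,y,z$: $xy\le z$ iff $x\le z/y$ iff $y\le x\backslash z$; - for all $x,y,u,v$: $\lambda_u((x\vee y)\backslash x)\vee\rho_v((x\vee y)\backslash y)=e$, where $\lambda_a(b)=(a\backslash(ba))\wedge e$ and $\rho_a(b)=((ab)/a)\wedge e$. The constant $f$ is arbitrary. An $\mathbf{HpsUL}^\ast$-algebra is one additionally satisfying weak commutativity: $xy\le e$ implies $yx\le e$. An $\mathbf{HpsUL}^\ast_\omega$-algebra is an $\mathbf{HpsUL}^\ast$-algebra satisfying $x\backslash e=x^2\backslash e$ for all $x$, where $x^2=x\cdot x$. A chain is a linearly ordered such algebra. *)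

theory Defs
  imports Main
begin

text \<open>An algebra is given by its operations on the carrier type 'a (the whole type is the
carrier).  The lattice order is defined from the meet: x \<le> y iff x \<and> y = x.\<close>

definition lat_le :: "('a \<Rightarrow> 'a \<Rightarrow> 'a) \<Rightarrow> 'a \<Rightarrow> 'a \<Rightarrow> bool" where
  "lat_le meet x y \<longleftrightarrow> meet x y = x"

definition bounded_lattice_ops ::
  "('a \<Rightarrow> 'a \<Rightarrow> 'a) \<Rightarrow> ('a \<Rightarrow> 'a \<Rightarrow> 'a) \<Rightarrow> 'a \<Rightarrow> 'a \<Rightarrow> bool" where
  "bounded_lattice_ops meet join bt tp \<longleftrightarrow>
     (\<forall>x y z. meet x (meet y z) = meet (meet x y) z) \<and>
     (\<forall>x y z. join x (join y z) = join (join x y) z) \<and>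
     (\<forall>x y. meet x y = meet y x) \<and>
     (\<forall>x y. join x y = join y x) \<and>
     (\<forall>x y. meet x (join x y) = x) \<and>
     (\<forall>x y. join x (meet x y) = x) \<and>
     (\<forall>x. meet bt x = bt) \<and>
     (\<forall>x. join tp x = tp)"

definition monoid_ops :: "('a \<Rightarrow> 'a \<Rightarrow> 'a) \<Rightarrow> 'a \<Rightarrow> bool" where
  "monoid_ops mult e \<longleftrightarrow>
     (\<forall>x y z. mult x (mult y z) = mult (mult x y) z) \<and>
     (\<forall>x. mult e x = x) \<and> (\<forall>x. mult x e = x)"

text \<open>Residuation: xy \<le> z iff x \<le> z/y iff y \<le> x\z.  ldiv x z = x\z, rdiv z y = z/y.\<close>
definition residuated_ops ::
  "('a \<Rightarrow> 'a \<Rightarrow> 'a) \<Rightarrow> ('a \<Rightarrow> 'a \<Rightarrow> 'a) \<Rightarrow> ('a \<Rightarrow> 'a \<Rightarrow> 'a) \<Rightarrow> ('a \<Rightarrow> 'a \<Rightarrow> 'a) \<Rightarrow> bool" where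
  "residuated_ops meet mult ldiv rdiv \<longleftrightarrow>
     (\<forall>x y z. (lat_le meet (mult x y) z \<longleftrightarrow> lat_le meet x (rdiv z y)) \<and>
              (lat_le meet x (rdiv z y) \<longleftrightarrow> lat_le meet y (ldiv x z)))"

definition lconj :: "('a \<Rightarrow> 'a \<Rightarrow> 'a) \<Rightarrow> ('a \<Rightarrow> 'a \<Rightarrow> 'a) \<Rightarrow> ('a \<Rightarrow> 'a \<Rightarrow> 'a) \<Rightarrow> 'a \<Rightarrow> 'a \<Rightarrow> 'a \<Rightarrow> 'a" where
  "lconj meet mult ldiv e a b = meet (ldiv a (mult b a)) e"

definition rconj :: "('a \<Rightarrow> 'a \<Rightarrow> 'a) \<Rightarrow> ('a \<Rightarrow> 'a \<Rightarrow> 'a) \<Rightarrow> ('a \<Rightarrow> 'a \<Rightarrow> 'a) \<Rightarrow> 'a \<Rightarrow> 'a \<Rightarrow> 'a \<Rightarrow> 'a" where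
  "rconj meet mult rdiv e a b = meet (rdiv (mult a b) a) e"

definition HpsUL ::
  "('a \<Rightarrow> 'a \<Rightarrow> 'a) \<Rightarrow> ('a \<Rightarrow> 'a \<Rightarrow> 'a) \<Rightarrow> ('a \<Rightarrow> 'a \<Rightarrow> 'a) \<Rightarrow> ('a \<Rightarrow> 'a \<Rightarrow> 'a)
   \<Rightarrow> ('a \<Rightarrow> 'a \<Rightarrow> 'a) \<Rightarrow> 'a \<Rightarrow> 'a \<Rightarrow> 'a \<Rightarrow> 'a \<Rightarrow> bool" where
  "HpsUL meet join mult ldiv rdiv e f bt tp \<longleftrightarrow>
     bounded_lattice_ops meet join bt tp \<and>
     monoid_ops mult e \<and>
     residuated_ops meet mult ldiv rdiv \<and>
     (\<forall>x y u v. join (lconj meet mult ldiv e u (ldiv (join x y) x))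
                     (rconj meet mult rdiv e v (ldiv (join x y) y)) = e)"

definition HpsUL_star ::
  "('a \<Rightarrow> 'a \<Rightarrow> 'a) \<Rightarrow> ('a \<Rightarrow> 'a \<Rightarrow> 'a) \<Rightarrow> ('a \<Rightarrow> 'a \<Rightarrow> 'a) \<Rightarrow> ('a \<Rightarrow> 'a \<Rightarrow> 'a)
   \<Rightarrow> ('a \<Rightarrow> 'a \<Rightarrow> 'a) \<Rightarrow> 'a \<Rightarrow> 'a \<Rightarrow> 'a \<Rightarrow> 'a \<Rightarrow> bool" where
  "HpsUL_star meet join mult ldiv rdiv e f bt tp \<longleftrightarrow>
     HpsUL meet join mult ldiv rdiv e f bt tp \<and>
     (\<forall>x y. lat_le meet (mult x y) e \<longrightarrow> lat_le meet (mult y x) e)"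

definition HpsUL_star_omega ::
  "('a \<Rightarrow> 'a \<Rightarrow> 'a) \<Rightarrow> ('a \<Rightarrow> 'a \<Rightarrow> 'a) \<Rightarrow> ('a \<Rightarrow> 'a \<Rightarrow> 'a) \<Rightarrow> ('a \<Rightarrow> 'a \<Rightarrow> 'a)
   \<Rightarrow> ('a \<Rightarrow> 'a \<Rightarrow> 'a) \<Rightarrow> 'a \<Rightarrow> 'a \<Rightarrow> 'a \<Rightarrow> 'a \<Rightarrow> bool" where
  "HpsUL_star_omega meet join mult ldiv rdiv e f bt tp \<longleftrightarrow>
     HpsUL_star meet join mult ldiv rdiv e f bt tp \<and>
     (\<forall>x. ldiv x e = ldiv (mult x x) e)"

definition is_chain :: "('a \<Rightarrow> 'a \<Rightarrow> 'a) \<Rightarrow> bool" where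
  "is_chain meet \<longleftrightarrow> (\<forall>x y. lat_le meet x y \<or> lat_le meet y x)"

end

theory Submission
  imports Defs
begin

locale H =
  fixes meet join mult ldiv rdiv :: "'a \<Rightarrow> 'a \<Rightarrow> 'a" and e ff bt tp :: 'a
  assumes HH: "HpsUL meet join mult ldiv rdiv e ff bt tp"
  and fin: "finite (UNIV :: 'a set)"
begin

abbreviation le :: "'a \<Rightarrow> 'a \<Rightarrow> bool" where "le \<equiv> lat_le meet"
abbreviation lam where "lam u x \<equiv> lconj meet mult ldiv e u x"
abbreviation rho where "rho u x \<equiv> rconj meet mult rdiv e u x"

lemma L: "bounded_lattice_ops meet join bt tp" "monoid_ops mult e" "residuated_ops meet mult ldiv rdiv"
  "\<And>x y u v. join (lam u (ldiv (join x y) x)) (rho v (ldiv (join x y) y)) = e"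
  using HH unfolding HpsUL_def by auto

lemma mA: "meet x (meet y z) = meet (meet x y) z" using L(1) unfolding bounded_lattice_ops_def by blast
lemma jA: "join x (join y z) = join (join x y) z" using L(1) unfolding bounded_lattice_ops_def by blast
lemma mC: "meet x y = meet y x" using L(1) unfolding bounded_lattice_ops_def by blast
lemma jC: "join x y = join y x" using L(1) unfolding bounded_lattice_ops_def by blast
lemma ab1: "meet x (join x y) = x" using L(1) unfolding bounded_lattice_ops_def by blast
lemma ab2: "join x (meet x y) = x" using L(1) unfolding bounded_lattice_ops_def by blast
lemma uA: "mult x (mult y z) = mult (mult x y) z" using L(2) unfolding monoid_ops_def by blast
lemma uL[simp]: "mult e x = x" using L(2) unfolding monoid_ops_def by blast
lemma uR[simp]: "mult x e = x" using L(2) unfolding monoid_ops_def by blast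
lemma res1: "le (mult x y) z = le x (rdiv z y)" using L(3) unfolding residuated_ops_def by blast
lemma res2: "le (mult x y) z = le y (ldiv x z)" using L(3) unfolding residuated_ops_def by blast

lemma mI: "meet x x = x" by (metis ab1 ab2)
lemma le_refl[simp]: "le x x" by (simp add: lat_le_def mI)
lemma le_antisym: "le x y \<Longrightarrow> le y x \<Longrightarrow> x = y" by (metis lat_le_def mC)
lemma le_trans: "le x y \<Longrightarrow> le y z \<Longrightarrow> le x z" by (metis lat_le_def mA)
lemma meet_lb1: "le (meet x y) x" by (metis lat_le_def mA mC mI)
lemma meet_lb2: "le (meet x y) y" by (metis meet_lb1 mC)
lemma meet_glb: "le z x \<Longrightarrow> le z y \<Longrightarrow> le z (meet x y)" by (metis lat_le_def mA)
lemma join_ub1: "le x (join x y)" by (simp add: lat_le_def ab1)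
lemma join_ub2: "le y (join x y)" by (metis join_ub1 jC)
declare le_trans[trans]

lemma le_join: "le x z \<Longrightarrow> join x z = z" by (metis lat_le_def ab2 jC mC)
lemma join_lub: "le x z \<Longrightarrow> le y z \<Longrightarrow> le (join x y) z"
proof -
  assume a: "le x z" "le y z"
  have "join (join x y) z = z" using a le_join jA by metis
  thus ?thesis by (metis lat_le_def ab1)
qed

lemma mono_l: "le x y \<Longrightarrow> le (mult z x) (mult z y)"
  by (metis le_trans le_refl res2)
lemma mono_r: "le x y \<Longrightarrow> le (mult x z) (mult y z)"
  by (metis le_trans le_refl res1)
lemma mono2: "le x y \<Longrightarrow> le z w \<Longrightarrow> le (mult x z) (mult y w)"
  by (meson le_trans mono_l mono_r)

lemma ldiv_e[simp]: "ldiv e y = y"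
  by (metis le_antisym le_refl res2 uL)
lemma rdiv_e[simp]: "rdiv y e = y"
  by (metis le_antisym le_refl res1 uR)

lemma dist_l: "le (mult x (join y z)) (join (mult x y) (mult x z))"
  by (metis join_lub join_ub1 join_ub2 res2)
lemma dist_r: "le (mult (join y z) x) (join (mult y x) (mult z x))"
  by (metis join_lub join_ub1 join_ub2 res1)

lemma lam_e: "le (lam u x) e" unfolding lconj_def by (rule meet_lb2)
lemma rho_e: "le (rho u x) e" unfolding rconj_def by (rule meet_lb2)
lemma lam_prop: "le (mult u (lam u x)) (mult x u)"
  unfolding lconj_def by (metis meet_lb1 res2)
lemma rho_prop: "le (mult (rho u x) u) (mult u x)"
  unfolding rconj_def by (metis meet_lb1 res1)
lemma lam_ge: "le z e \<Longrightarrow> le (mult u z) (mult x u) \<Longrightarrow> le z (lam u x)"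
  unfolding lconj_def by (metis meet_glb res2)
lemma rho_ge: "le z e \<Longrightarrow> le (mult z u) (mult u x) \<Longrightarrow> le z (rho u x)"
  unfolding rconj_def by (metis meet_glb res1)

lemma lam_mono: "le x y \<Longrightarrow> le (lam u x) (lam u y)"
  by (meson lam_e lam_ge lam_prop le_trans mono_r)
lemma rho_mono: "le x y \<Longrightarrow> le (rho u x) (rho u y)"
  by (meson rho_e rho_ge rho_prop le_trans mono_l)

lemma ee: "le (mult x y) e" if "le x e" "le y e"
  by (metis mono2 that uR)

lemma lam_mult: "le (mult (lam u x) (lam u y)) (lam u (mult x y))"
proof (rule lam_ge)
  show "le (mult (lam u x) (lam u y)) e" by (simp add: ee lam_e)
  have "le (mult u (mult (lam u x) (lam u y))) (mult (mult x u) (lam u y))"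
    by (metis lam_prop mono_r uA)
  also have "le \<dots> (mult (mult x y) u)" by (metis lam_prop mono_l uA)
  finally show "le (mult u (mult (lam u x) (lam u y))) (mult (mult x y) u)" .
qed

lemma rho_mult: "le (mult (rho u x) (rho u y)) (rho u (mult x y))"
proof (rule rho_ge)
  show "le (mult (rho u x) (rho u y)) e" by (simp add: ee rho_e)
  have "le (mult (mult (rho u x) (rho u y)) u) (mult (rho u x) (mult u y))"
    by (metis rho_prop mono_l uA)
  also have "le \<dots> (mult u (mult x y))" by (metis rho_prop mono_r uA)
  finally show "le (mult (mult (rho u x) (rho u y)) u) (mult u (mult x y))" .
qed

lemma lam_ee: "lam u e = e"
  by (metis lam_e lam_ge le_antisym le_refl uL uR)
lemma rho_ee: "rho u e = e"
  by (metis rho_e rho_ge le_antisym le_refl uL uR)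

lemma lam_unit: "lam e x = meet x e" unfolding lconj_def by simp
lemma rho_unit: "rho e x = meet x e" unfolding rconj_def by simp

lemma meet_e: "le x e \<Longrightarrow> meet x e = x" by (simp add: lat_le_def)

lemma join_e_le: "join a b = e \<Longrightarrow> le a e \<and> le b e"
  by (metis join_ub1 join_ub2)

lemma JL: "join a b = e \<Longrightarrow> join (lam u a) (rho v b) = e"
  using L(4)[where x=a and y=b and u=u and v=v] by simp

lemma step_lam: "join a b = e \<Longrightarrow> join (lam u a) b = e"
  by (metis JL join_e_le meet_e rho_unit)
lemma step_rho: "join a b = e \<Longrightarrow> join (rho u a) b = e"
  by (metis JL jC join_e_le meet_e lam_unit)

inductive_set cc :: "'a \<Rightarrow> 'a set" for p where
  base: "p \<in> cc p"
| lm: "x \<in> cc p \<Longrightarrow> lam u x \<in> cc p"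
| rh: "x \<in> cc p \<Longrightarrow> rho u x \<in> cc p"

inductive_set mon :: "'a \<Rightarrow> 'a set" for p where
  unit: "e \<in> mon p"
| cons: "x \<in> cc p \<Longrightarrow> m \<in> mon p \<Longrightarrow> mult x m \<in> mon p"

lemma cc_join1: "x \<in> cc a \<Longrightarrow> join a b = e \<Longrightarrow> join x b = e"
proof (induction x rule: cc.induct)
  case base thus ?case .
next
  case (lm x u) thus ?case using step_lam by blast
next
  case (rh x u) thus ?case using step_rho by blast
qed

lemma cc_join2: "y \<in> cc b \<Longrightarrow> join x b = e \<Longrightarrow> join x y = e"
proof (induction y rule: cc.induct)
  case base thus ?case .
next
  case (lm y u) thus ?case using step_lam jC by metis
next
  case (rh y u) thus ?case using step_rho jC by metis
qed

lemma JP: "join a b = e \<Longrightarrow> join a c = e \<Longrightarrow> join a (mult b c) = e"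
proof -
  assume ab: "join a b = e" and ac: "join a c = e"
  hence le: "le a e" "le b e" "le c e" using join_e_le by auto
  let ?R = "join a (mult b c)"
  have "le (mult (join a b) (join a c)) ?R"
  proof -
    have 1: "le (mult a (join a c)) ?R"
      by (metis ac join_ub1 uR mono_l le_trans le)
    have "le (mult b a) ?R" by (metis join_ub1 le(2) le_trans mono_r uL)
    moreover have "le (mult b c) ?R" by (rule join_ub2)
    ultimately have 2: "le (mult b (join a c)) ?R" by (metis join_lub res2)
    from 1 2 show ?thesis by (metis join_lub res1)
  qed
  hence "le e ?R" using ab ac by simp
  moreover have "le ?R e" using le by (metis ee join_lub)
  ultimately show ?thesis by (metis le_antisym)
qed

lemma cc_mon: "m \<in> mon b \<Longrightarrow> x \<in> cc a \<Longrightarrow> join a b = e \<Longrightarrow> join x m = e"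
proof (induction m rule: mon.induct)
  case unit
  then show ?case using cc_join1 join_e_le le_join by blast
next
  case (cons y m)
  then show ?case by (metis JP cc_join1 cc_join2)
qed

lemma mon_mon: "m1 \<in> mon a \<Longrightarrow> m2 \<in> mon b \<Longrightarrow> join a b = e \<Longrightarrow> join m1 m2 = e"
proof (induction m1 rule: mon.induct)
  case unit
  have "le m2 e" using unit
    by (metis cc_mon cc.base join_e_le)
  then show ?case by (metis jC le_join)
next
  case (cons x m)
  hence "join x m2 = e" using cc_mon by blast
  with cons show ?case by (metis JP jC)
qed

lemma cc_le: "x \<in> cc a \<Longrightarrow> le a e \<Longrightarrow> le x e"
  by (induction x rule: cc.induct) (auto simp: lam_e rho_e)

lemma mon_le: "m \<in> mon a \<Longrightarrow> le a e \<Longrightarrow> le m e"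
  by (induction m rule: mon.induct) (auto simp: cc_le ee)

lemma mon_mult: "m1 \<in> mon p \<Longrightarrow> m2 \<in> mon p \<Longrightarrow> mult m1 m2 \<in> mon p"
  by (induction m1 rule: mon.induct) (auto simp: uA[symmetric] intro: mon.cons)

lemma mon_lam: "m \<in> mon p \<Longrightarrow> \<exists>m'\<in>mon p. le m' (lam u m)"
proof (induction m rule: mon.induct)
  case unit
  then show ?case using lam_ee mon.unit by force
next
  case (cons x m)
  then obtain m' where m': "m' \<in> mon p" "le m' (lam u m)" by blast
  have "le (mult (lam u x) m') (lam u (mult x m))"
    by (meson lam_mult le_trans m'(2) mono_l)
  moreover have "mult (lam u x) m' \<in> mon p" using cons m' by (simp add: cc.lm mon.cons)
  ultimately show ?case by blast
qed

lemma mon_rho: "m \<in> mon p \<Longrightarrow> \<exists>m'\<in>mon p. le m' (rho u m)"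
proof (induction m rule: mon.induct)
  case unit
  then show ?case using rho_ee mon.unit by force
next
  case (cons x m)
  then obtain m' where m': "m' \<in> mon p" "le m' (rho u m)" by blast
  have "le (mult (rho u x) m') (rho u (mult x m))"
    by (meson rho_mult le_trans m'(2) mono_l)
  moreover have "mult (rho u x) m' \<in> mon p" using cons m' by (simp add: cc.rh mon.cons)
  ultimately show ?case by blast
qed

definition nf :: "'a set \<Rightarrow> bool" where
  "nf F \<longleftrightarrow> e \<in> F \<and> (\<forall>x\<in>F. le x e) \<and> (\<forall>x\<in>F. \<forall>y. le x y \<longrightarrow> le y e \<longrightarrow> y \<in> F)
    \<and> (\<forall>x\<in>F. \<forall>y\<in>F. mult x y \<in> F) \<and> (\<forall>x\<in>F. \<forall>u. lam u x \<in> F \<and> rho u x \<in> F)"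

definition G :: "'a set \<Rightarrow> 'a \<Rightarrow> 'a set" where
  "G F p = {g. le g e \<and> (\<exists>f\<in>F. \<exists>m\<in>mon p. le (mult f m) g)}"

lemma G_nf: assumes F: "nf F" and p: "le p e" shows "nf (G F p)" "F \<subseteq> G F p" "p \<in> G F p"
proof -
  have Fe: "e \<in> F" and Fle: "\<And>x. x \<in> F \<Longrightarrow> le x e"
    and Fup: "\<And>x y. x \<in> F \<Longrightarrow> le x y \<Longrightarrow> le y e \<Longrightarrow> y \<in> F"
    and Fm: "\<And>x y. x \<in> F \<Longrightarrow> y \<in> F \<Longrightarrow> mult x y \<in> F"
    and Fc: "\<And>x u. x \<in> F \<Longrightarrow> lam u x \<in> F" "\<And>x u. x \<in> F \<Longrightarrow> rho u x \<in> F"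
    using F unfolding nf_def by blast+
  show "F \<subseteq> G F p" unfolding G_def using Fle mon.unit by force
  show "p \<in> G F p" unfolding G_def using p Fe mon.cons[OF cc.base mon.unit, of p] by force
  show "nf (G F p)" unfolding nf_def
  proof (intro conjI ballI allI impI)
    show "e \<in> G F p" unfolding G_def using Fe mon.unit by force
  next
    fix x assume "x \<in> G F p" thus "le x e" unfolding G_def by auto
  next
    fix x y assume "x \<in> G F p" "le x y" "le y e" thus "y \<in> G F p"
      unfolding G_def using le_trans by blast
  next
    fix x y assume x: "x \<in> G F p" and y: "y \<in> G F p"
    then obtain f1 m1 f2 m2 where a: "f1 \<in> F" "m1 \<in> mon p" "le (mult f1 m1) x"
      "f2 \<in> F" "m2 \<in> mon p" "le (mult f2 m2) y" "le x e" "le y e"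
      unfolding G_def by auto
    have "le (mult (mult f1 (rho m1 f2)) (mult m1 m2)) (mult (mult f1 m1) (mult f2 m2))"
    proof -
      have "le (mult (rho m1 f2) m1) (mult m1 f2)" by (rule rho_prop)
      hence "le (mult f1 (mult (mult (rho m1 f2) m1) m2)) (mult f1 (mult (mult m1 f2) m2))"
        by (intro mono_l mono_r)
      thus ?thesis by (simp add: uA)
    qed
    also have "le \<dots> (mult x y)" using a by (intro mono2)
    finally have "le (mult (mult f1 (rho m1 f2)) (mult m1 m2)) (mult x y)" .
    moreover have "mult f1 (rho m1 f2) \<in> F" using a Fm Fc by blast
    moreover have "mult m1 m2 \<in> mon p" using a mon_mult by blast
    moreover have "le (mult x y) e" using a ee by blast
    ultimately show "mult x y \<in> G F p" unfolding G_def by blast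
  next
    fix x u assume x: "x \<in> G F p"
    then obtain f m where a: "f \<in> F" "m \<in> mon p" "le (mult f m) x" unfolding G_def by auto
    obtain m' where m': "m' \<in> mon p" "le m' (lam u m)" using mon_lam a by blast
    obtain m'' where m'': "m'' \<in> mon p" "le m'' (rho u m)" using mon_rho a by blast
    have "le (mult (lam u f) m') (lam u x)"
      by (meson a(3) lam_mono lam_mult le_trans m'(2) mono_l)
    moreover have "le (mult (rho u f) m'') (rho u x)"
      by (meson a(3) rho_mono rho_mult le_trans m''(2) mono_l)
    ultimately show "lam u x \<in> G F p" "rho u x \<in> G F p"
      unfolding G_def using Fc a m' m'' lam_e rho_e by blast+
  qed
qed

definition R :: "'a set \<Rightarrow> 'a \<Rightarrow> 'a \<Rightarrow> bool" where
  "R F b c \<longleftrightarrow> (\<exists>f\<in>F. le (mult b f) c)"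

lemma prime:
  assumes F: "nf F" and dF: "d \<notin> F" and dle: "le d e"
    and mx: "\<And>F'. nf F' \<Longrightarrow> d \<notin> F' \<Longrightarrow> F \<subseteq> F' \<Longrightarrow> F = F'"
  shows "R F b c \<or> R F c b"
proof -
  let ?P = "meet (ldiv (join b c) b) e" and ?Q = "meet (ldiv (join b c) c) e"
  have PQ: "join ?P ?Q = e" using L(4)[where x=b and y=c and u=e and v=e] by (simp add: lam_unit rho_unit)
  have Fup: "\<And>x y. x \<in> F \<Longrightarrow> le x y \<Longrightarrow> le y e \<Longrightarrow> y \<in> F"
    and Fle: "\<And>x. x \<in> F \<Longrightarrow> le x e"
    and Fm: "\<And>x y. x \<in> F \<Longrightarrow> y \<in> F \<Longrightarrow> mult x y \<in> F" using F unfolding nf_def by blast+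
  have Pe: "le ?P e" "le ?Q e" by (simp_all add: meet_lb2)
  show ?thesis
  proof (rule ccontr)
    assume nr: "\<not> (R F b c \<or> R F c b)"
    have "?P \<notin> F"
    proof
      assume "?P \<in> F"
      moreover have "le (mult c ?P) b"
        by (meson join_ub2 le_trans meet_lb1 mono2 res2 le_refl)
      ultimately show False using nr unfolding R_def by blast
    qed
    moreover have "?Q \<notin> F"
    proof
      assume "?Q \<in> F"
      moreover have "le (mult b ?Q) c"
        by (meson join_ub1 le_trans meet_lb1 mono2 res2 le_refl)
      ultimately show False using nr unfolding R_def by blast
    qed
    ultimately have "d \<in> G F ?P" "d \<in> G F ?Q"
      using G_nf[OF F Pe(1)] G_nf[OF F Pe(2)] mx by blast+
    then obtain f1 m1 f2 m2 where a: "f1 \<in> F" "m1 \<in> mon ?P" "le (mult f1 m1) d"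
      "f2 \<in> F" "m2 \<in> mon ?Q" "le (mult f2 m2) d" unfolding G_def by auto
    have j: "join m1 m2 = e" using mon_mon a PQ by blast
    have "le (mult (mult f1 f2) (join m1 m2)) (join (mult (mult f1 f2) m1) (mult (mult f1 f2) m2))"
      by (rule dist_l)
    moreover have "le (mult (mult f1 f2) m1) d"
    proof -
      have "le (mult f1 (mult f2 m1)) (mult f1 m1)"
        using Fle a(4) by (metis mono_l mono_r uL)
      thus ?thesis using a(3) by (metis uA le_trans)
    qed
    moreover have "le (mult (mult f1 f2) m2) d"
    proof -
      have "le (mult f1 (mult f2 m2)) (mult f2 m2)"
        using Fle a(1) by (metis mono_r uL)
      thus ?thesis using a(6) by (metis uA le_trans)
    qed
    ultimately have "le (mult f1 f2) d" using j by (metis join_lub le_trans uR)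
    hence "d \<in> F" using Fup Fm a dle by blast
    thus False using dF by blast
  qed
qed

lemma separate:
  assumes "\<not> le a e"
  shows "\<exists>F. nf F \<and> (\<forall>b c. R F b c \<or> R F c b) \<and> \<not> R F a e"
proof -
  let ?d = "meet (ldiv a e) e"
  have de: "le ?d e" by (rule meet_lb2)
  have nfe: "nf {e}" unfolding nf_def using lam_ee rho_ee by (auto simp: ee le_antisym)
  have "?d \<noteq> e"
  proof
    assume "?d = e"
    hence "le e (ldiv a e)" by (metis meet_lb1)
    thus False using assms res2 by (metis uR)
  qed
  hence "{e} \<in> {F. nf F \<and> ?d \<notin> F}" using nfe by auto
  moreover have "finite {F. nf F \<and> ?d \<notin> F}"
  proof -
    have "finite (UNIV :: 'a set set)" using fin by (simp add: Finite_Set.finite_set)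
    thus ?thesis by (rule finite_subset[rotated]) simp
  qed
  ultimately obtain F where F: "F \<in> {F. nf F \<and> ?d \<notin> F}"
    and mx: "\<forall>F'\<in>{F. nf F \<and> ?d \<notin> F}. F \<subseteq> F' \<longrightarrow> F = F'"
    using finite_has_maximal by blast
  have nfF: "nf F" and dF: "?d \<notin> F" using F by auto
  have tot: "\<forall>b c. R F b c \<or> R F c b"
    using prime[OF nfF dF de] mx by blast
  have "\<not> R F a e"
  proof
    assume "R F a e"
    then obtain f where f: "f \<in> F" "le (mult a f) e" unfolding R_def by blast
    have "le f e" using nfF f unfolding nf_def by blast
    hence "le f ?d" using f res2 meet_glb by blast
    hence "?d \<in> F" using nfF f de unfolding nf_def by blast
    thus False using dF by blast
  qed
  thus ?thesis using nfF tot by blast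
qed

section \<open>Reasoning modulo a prime normal filter\<close>

context
  fixes F assumes nfF: "nf F" and tot: "\<And>b c. R F b c \<or> R F c b"
begin

lemma Fe: "e \<in> F" and Fle: "\<And>x. x \<in> F \<Longrightarrow> le x e"
  and Fm: "\<And>x y. x \<in> F \<Longrightarrow> y \<in> F \<Longrightarrow> mult x y \<in> F"
  and Fl: "\<And>x u. x \<in> F \<Longrightarrow> lam u x \<in> F"
  using nfF unfolding nf_def by blast+

lemma R_le: "le b c \<Longrightarrow> R F b c" unfolding R_def using Fe by force
lemma R_refl: "R F b b" by (simp add: R_le)
lemma R_trans: "R F a b \<Longrightarrow> R F b c \<Longrightarrow> R F a c"
  unfolding R_def by (metis Fm le_trans mono_r uA)
lemma R_l: "R F b c \<Longrightarrow> R F (mult w b) (mult w c)"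
  unfolding R_def by (metis mono_l uA)
lemma R_r: "R F b c \<Longrightarrow> R F (mult b w) (mult c w)"
proof -
  assume "R F b c"
  then obtain f where f: "f \<in> F" "le (mult b f) c" unfolding R_def by blast
  have "le (mult (mult b w) (lam w f)) (mult (mult b f) w)"
    by (metis lam_prop mono_l uA)
  also have "le \<dots> (mult c w)" using f(2) by (rule mono_r)
  finally show ?thesis unfolding R_def using Fl f by blast
qed

definition pw :: "'a \<Rightarrow> nat \<Rightarrow> 'a" where "pw x n = (mult x ^^ n) e"

lemma pw0[simp]: "pw x 0 = e" by (simp add: pw_def)
lemma pwS: "pw x (Suc n) = mult x (pw x n)" by (simp add: pw_def)
lemma pwS': "pw x (Suc n) = mult (pw x n) x"
  by (induction n) (simp_all add: pwS uA)
lemma pw1: "pw x 1 = x" by (simp add: pwS)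

lemma pw_mono: "R F e x \<Longrightarrow> i \<le> j \<Longrightarrow> R F (pw x i) (pw x j)"
proof (induction j)
  case 0 thus ?case by (simp add: R_refl)
next
  case (Suc j)
  have "R F (pw x j) (pw x (Suc j))" using R_r[OF Suc.prems(1), of "pw x j"] by (simp add: pwS)
  thus ?case using Suc by (metis R_refl R_trans le_Suc_eq)
qed

lemma stab: assumes "R F e x" shows "\<exists>N\<ge>1. R F (pw x (Suc N)) (pw x N)"
proof -
  have "\<not> inj (pw x)"
  proof
    assume "inj (pw x)"
    hence "finite (UNIV :: nat set)" using fin finite_imageD finite_subset by (metis subset_UNIV)
    thus False by simp
  qed
  then obtain i j where ij: "i \<noteq> j" "pw x i = pw x j" unfolding inj_def by blast
  then obtain i j where ij: "i < j" "pw x i = pw x j" by (metis linorder_neq_iff)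
  have "R F (pw x (Suc i)) (pw x i)" using pw_mono[OF assms, of "Suc i" j] ij by simp
  hence "R F (pw x (Suc (Suc i))) (pw x (Suc i))" using R_l by (simp add: pwS)
  thus ?thesis by (intro exI[of _ "Suc i"]) simp
qed

lemma descent: "R F s (pw x N) \<Longrightarrow> (\<And>m. R F s (pw x (Suc m)) \<Longrightarrow> R F s (pw x m)) \<Longrightarrow> R F s e"
proof -
  assume a: "R F s (pw x N)" and st: "\<And>m. R F s (pw x (Suc m)) \<Longrightarrow> R F s (pw x m)"
  have "k \<le> N \<Longrightarrow> R F s (pw x (N - k))" for k
  proof (induction k)
    case 0 thus ?case using a by simp
  next
    case (Suc k)
    hence "R F s (pw x (Suc (N - Suc k)))" by (simp add: Suc_diff_Suc)
    thus ?case using st by blast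
  qed
  from this[of N] show ?thesis by simp
qed

lemma goal2: assumes xz: "le (mult x z) e" shows "R F (mult x (mult x z)) e"
proof (cases "R F x e")
  case True
  hence "R F (mult x (mult x z)) (mult e (mult x z))" by (rule R_r)
  thus ?thesis using xz R_le R_trans by auto
next
  case False
  hence ex: "R F e x" using tot by blast
  show ?thesis
  proof (rule ccontr)
    assume "\<not> ?thesis"
    hence exz: "R F e (mult x (mult x z))" using tot by blast
    obtain N where N: "N \<ge> 1" "R F (pw x (Suc N)) (pw x N)" using stab[OF ex] by blast
    let ?s = "pw x N"
    have sx: "R F (mult ?s x) ?s" using N by (simp add: pwS')
    have "R F ?s (mult ?s (mult x (mult x z)))" using R_l[OF exz, of ?s] by simp
    moreover have "R F (mult ?s (mult x (mult x z))) (mult ?s z)"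
    proof -
      have "R F (mult (mult ?s x) x) (mult ?s x)" using R_r[OF sx] .
      hence "R F (mult (mult ?s x) x) ?s" using sx R_trans by blast
      thus ?thesis using R_r by (simp add: uA)
    qed
    ultimately have ssz: "R F ?s (mult ?s z)" using R_trans by blast
    have "R F ?s e"
    proof (rule descent[of ?s x N])
      show "R F ?s ?s" by (rule R_refl)
    next
      fix m assume "R F ?s (pw x (Suc m))"
      hence "R F (mult ?s z) (mult (pw x (Suc m)) z)" by (rule R_r)
      moreover have "mult (pw x (Suc m)) z = mult (pw x m) (mult x z)" by (simp add: pwS' uA)
      moreover have "R F (mult (pw x m) (mult x z)) (pw x m)"
        using R_l[OF R_le[OF xz]] by simp
      ultimately show "R F ?s (pw x m)" using ssz R_trans by metis
    qed
    moreover have "R F x ?s" using pw_mono[OF ex N(1)] by (simp add: pwS)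
    ultimately have "R F x e" using R_trans by blast
    thus False using False by blast
  qed
qed

lemma goal1: assumes xxy: "le (mult x (mult x y)) e" shows "R F (mult x y) e"
proof (cases "R F e x")
  case True
  hence "R F (mult e (mult x y)) (mult x (mult x y))" by (rule R_r)
  thus ?thesis using xxy R_le R_trans by auto
next
  case False
  hence xe: "R F x e" using tot by blast
  show ?thesis
  proof (rule ccontr)
    assume "\<not> ?thesis"
    hence exy: "R F e (mult x y)" using tot by blast
    have "R F (mult x y) y" using R_r[OF xe, of y] by simp
    hence ey: "R F e y" using exy R_trans by blast
    obtain N where N: "N \<ge> 1" "R F (pw y (Suc N)) (pw y N)" using stab[OF ey] by blast
    let ?t = "pw y N"
    have "R F ?t (mult (mult x y) ?t)" using R_r[OF exy, of ?t] by simp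
    moreover have "R F (mult (mult x y) ?t) (mult x ?t)"
      using R_l[OF N(2), of x] by (simp add: pwS uA)
    ultimately have txx: "R F ?t (mult x ?t)" using R_trans by blast
    moreover have "R F (mult x ?t) (mult x (mult x ?t))" using R_l[OF txx] .
    ultimately have txxt: "R F ?t (mult x (mult x ?t))" using R_trans by blast
    have "R F ?t e"
    proof (rule descent[of ?t y N])
      show "R F ?t ?t" by (rule R_refl)
    next
      fix m assume "R F ?t (pw y (Suc m))"
      hence "R F (mult x (mult x ?t)) (mult x (mult x (pw y (Suc m))))" by (intro R_l)
      moreover have "mult x (mult x (pw y (Suc m))) = mult (mult x (mult x y)) (pw y m)"
        by (simp add: pwS uA)
      moreover have "R F (mult (mult x (mult x y)) (pw y m)) (pw y m)"
        using R_r[OF R_le[OF xxy]] by simp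
      ultimately show "R F ?t (pw y m)" using txxt R_trans by metis
    qed
    moreover have "R F y ?t" using pw_mono[OF ey N(1)] by (simp add: pwS)
    ultimately have "R F y e" using R_trans by blast
    hence "R F (mult x y) x" using R_l by fastforce
    hence "R F (mult x y) e" using xe R_trans by blast
    thus False using \<open>\<not> R F (mult x y) e\<close> by blast
  qed
qed

end

lemma G1: "le (mult x (mult x y)) e \<Longrightarrow> le (mult x y) e"
  using separate goal1 by blast
lemma G2: "le (mult x z) e \<Longrightarrow> le (mult x (mult x z)) e"
  using separate goal2 by blast

lemma omega: "ldiv x e = ldiv (mult x x) e"
proof -
  have "le y (ldiv x e) \<longleftrightarrow> le y (ldiv (mult x x) e)" for y
    using G1 G2 res2 uA by metis
  thus ?thesis by (metis le_antisym le_refl)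
qed

end

theorem lemma2p6:
  fixes meet join mult ldiv rdiv :: "'a \<Rightarrow> 'a \<Rightarrow> 'a" and e f bt tp :: 'a
  shows "(finite (UNIV :: 'a set) \<and> is_chain meet \<and> HpsUL_star meet join mult ldiv rdiv e f bt tp
            \<longrightarrow> is_chain meet \<and> HpsUL_star_omega meet join mult ldiv rdiv e f bt tp)
       \<and> (finite (UNIV :: 'a set) \<and> HpsUL_star meet join mult ldiv rdiv e f bt tp
            \<longrightarrow> HpsUL_star_omega meet join mult ldiv rdiv e f bt tp)"
proof -
  have *: "HpsUL_star_omega meet join mult ldiv rdiv e f bt tp"
    if "finite (UNIV :: 'a set)" "HpsUL_star meet join mult ldiv rdiv e f bt tp"
  proof -
    interpret H meet join mult ldiv rdiv e f bt tp
      using that unfolding HpsUL_star_def by unfold_locales auto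
    show ?thesis using that omega unfolding HpsUL_star_omega_def by blast
  qed
  show ?thesis using * by blast
qed

end
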